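(* Let $(S,\omega)$ be a real symplectic vector space with positive polarization $E$ and associated complex structure $j$. For every unitary $h\in U(E)$ such that $h-\mathrm{id}$ is invertible, $$ {\det}^{1/2}\big(\tfrac12\mathrm{id}+iA(\iota(h))\big)=\frac{1}{\det(\mathrm{id}-h^{-1})}.$$
   Context: A positive polarization of $S$ is a Lagrangian subspace $E\subset S\otimes\mathbb C$ with $\frac1i\omega(x,\bar x)>0$ for all nonzero $x\in E$; $E$ carries the Hermitian product $(x,y)\mapsto\frac1i\omega(x,\bar y)$ and $U(E)$ is its unitary group. Let $j$ be the complex structure on $S$ with $E=\ker(j-i\,\mathrm{id})\subset S\otimes\mathbb C$; $\mathrm{sym}(S,j)$ is the space of endomorphisms of $S$ symmetric for the scalar product $\omega(X,jY)$; for $A\in\mathrm{sym}(S,j)$, ${\det}^{1/2}(\tfrac12\mathrm{id}+iA)$ is the square root of $\det(\tfrac12\mathrm{id}+iA)$ depending continuously on $A$ and positive at $A=0$. For $g\in\mathrm{Sp}(S)$ with $\mathrm{id}-g$ invertible, $A(g):=\tfrac12(\mathrm{id}+g)(\mathrm{id}-g)^{-1}j\in\mathrm{sym}(S,j)$. The map $\iota:U(E)\to\mathrm{Sp}(S)$ sends $h$ to the linear symplectomorphism $g$ of $S$ whose complexification acts as $h$ on $E$ and as $\bar h$ on $\overline E$ (its image is the set of elements commuting with $j$). *)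

theory Defs
  imports "HOL-Analysis.Analysis"
begin

text \<open>The real symplectic vector space S is modelled as real^'n (any finite-dimensional
real vector space is isomorphic to such a space); its complexification S \<otimes> C is complex^'n,
with the real vectors embedded componentwise.\<close>

definition vconj :: "complex^'n \<Rightarrow> complex^'n" where
  "vconj x = (\<chi> i. cnj (x $ i))"

definition cmat :: "real^'n^'m \<Rightarrow> complex^'n^'m" where
  "cmat A = (\<chi> i k. complex_of_real (A $ i $ k))"

definition omegaC :: "(real^'n \<Rightarrow> real^'n \<Rightarrow> real) \<Rightarrow> complex^'n \<Rightarrow> complex^'n \<Rightarrow> complex" where
  "omegaC \<omega> x y = (\<Sum>i\<in>UNIV. \<Sum>k\<in>UNIV. x $ i * y $ k * complex_of_real (\<omega> (axis i 1) (axis k 1)))"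

definition symplectic_form :: "(real^'n \<Rightarrow> real^'n \<Rightarrow> real) \<Rightarrow> bool" where
  "symplectic_form \<omega> \<longleftrightarrow> bilinear \<omega> \<and> (\<forall>x y. \<omega> x y = - \<omega> y x)
     \<and> (\<forall>x. (\<forall>y. \<omega> x y = 0) \<longrightarrow> x = 0)"

definition herm :: "(real^'n \<Rightarrow> real^'n \<Rightarrow> real) \<Rightarrow> complex^'n \<Rightarrow> complex^'n \<Rightarrow> complex" where
  "herm \<omega> x y = omegaC \<omega> x (vconj y) / \<i>"

definition positive_polarization :: "(real^'n \<Rightarrow> real^'n \<Rightarrow> real) \<Rightarrow> (complex^'n) set \<Rightarrow> bool" where
  "positive_polarization \<omega> E \<longleftrightarrow>
     subspace E \<and> (\<forall>c x. x \<in> E \<longrightarrow> c *s x \<in> E)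
     \<and> E = {x. \<forall>y\<in>E. omegaC \<omega> x y = 0}
     \<and> (\<forall>x\<in>E. x \<noteq> 0 \<longrightarrow> herm \<omega> x x \<in> \<real> \<and> 0 < Re (herm \<omega> x x))"

definition associated_cx_structure :: "(complex^'n) set \<Rightarrow> real^'n^'n \<Rightarrow> bool" where
  "associated_cx_structure E j \<longleftrightarrow> j ** j = - mat 1 \<and> E = {x. cmat j *v x = \<i> *s x}"

definition unitary_on :: "(real^'n \<Rightarrow> real^'n \<Rightarrow> real) \<Rightarrow> (complex^'n) set
    \<Rightarrow> (complex^'n \<Rightarrow> complex^'n) \<Rightarrow> bool" where
  "unitary_on \<omega> E h \<longleftrightarrow> bij_betw h E E
     \<and> (\<forall>x\<in>E. \<forall>y\<in>E. h (x + y) = h x + h y)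
     \<and> (\<forall>c. \<forall>x\<in>E. h (c *s x) = c *s h x)
     \<and> (\<forall>x\<in>E. \<forall>y\<in>E. herm \<omega> (h x) (h y) = herm \<omega> x y)"

definition iota :: "(complex^'n) set \<Rightarrow> (complex^'n \<Rightarrow> complex^'n) \<Rightarrow> real^'n^'n" where
  "iota E h = (THE g. (\<forall>x\<in>E. cmat g *v x = h x) \<and> (\<forall>x\<in>E. cmat g *v vconj x = vconj (h x)))"

text \<open>Determinant of a complex-linear endomorphism f of E: the determinant of its extension
by the identity on the complement conj E (S \<otimes> C = E \<oplus> conj E).\<close>
definition det_on :: "(complex^'n) set \<Rightarrow> (complex^'n \<Rightarrow> complex^'n) \<Rightarrow> complex" where
  "det_on E f = det (THE M :: complex^'n^'n.
      (\<forall>x\<in>E. M *v x = f x) \<and> (\<forall>x\<in>E. M *v vconj x = vconj x))"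

definition sym_SJ :: "(real^'n \<Rightarrow> real^'n \<Rightarrow> real) \<Rightarrow> real^'n^'n \<Rightarrow> (real^'n^'n) set" where
  "sym_SJ \<omega> j = {A. \<forall>X Y. \<omega> (A *v X) (j *v Y) = \<omega> X (j *v (A *v Y))}"

definition half_plus_iA :: "real^'n^'n \<Rightarrow> complex^'n^'n" where
  "half_plus_iA A = (\<chi> i k. (if i = k then 1/2 else 0) + \<i> * complex_of_real (A $ i $ k))"

text \<open>det^{1/2}(1/2 id + iA): the continuous square root on sym(S,j), positive at A = 0
(extended by 0 outside sym(S,j) to make the description unique).\<close>
definition sqrt_det :: "(real^'n \<Rightarrow> real^'n \<Rightarrow> real) \<Rightarrow> real^'n^'n \<Rightarrow> real^'n^'n \<Rightarrow> complex" where
  "sqrt_det \<omega> j = (THE f. continuous_on (sym_SJ \<omega> j) f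
      \<and> (\<forall>B\<in>sym_SJ \<omega> j. (f B)^2 = det (half_plus_iA B))
      \<and> f 0 \<in> \<real> \<and> 0 < Re (f 0)
      \<and> (\<forall>B. B \<notin> sym_SJ \<omega> j \<longrightarrow> f B = 0))"

definition A_of :: "real^'n^'n \<Rightarrow> real^'n^'n \<Rightarrow> real^'n^'n" where
  "A_of j g = (1/2) *\<^sub>R ((mat 1 + g) ** matrix_inv (mat 1 - g) ** j)"

end

theory Submission
  imports Defs
begin


definition cvec :: "real^'n \<Rightarrow> complex^'n" where "cvec X = (\<chi> i. complex_of_real (X$i))"
definition cj :: "complex^'n^'m \<Rightarrow> complex^'n^'m" where "cj M = (\<chi> i k. cnj (M$i$k))"

lemma cmat_mult: "cmat (A ** B) = cmat A ** cmat B"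
  by (simp add: cmat_def matrix_matrix_mult_def vec_eq_iff)
lemma cmat_add: "cmat (A + B) = cmat A + cmat B"
  by (simp add: cmat_def vec_eq_iff)
lemma cmat_diff: "cmat (A - B) = cmat A - cmat B"
  by (simp add: cmat_def vec_eq_iff)
lemma cmat_uminus: "cmat (- A) = - cmat A"
  by (simp add: cmat_def vec_eq_iff)
lemma cmat_mat: "cmat (mat c) = mat (complex_of_real c)"
  by (simp add: cmat_def mat_def vec_eq_iff)
lemma cmat_scaleR: "cmat (c *\<^sub>R A) = mat (complex_of_real c) ** cmat A"
  by (simp add: cmat_def mat_def matrix_matrix_mult_def vec_eq_iff if_distrib if_distribR sum.delta cong: if_cong)
lemma cmat_inj: "cmat A = cmat B \<Longrightarrow> A = B"
  by (simp add: cmat_def vec_eq_iff)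
lemma cmat_cvec: "cmat A *v cvec X = cvec (A *v X)"
  by (simp add: cmat_def cvec_def matrix_vector_mult_def vec_eq_iff)
lemma vconj_cvec: "vconj (cvec X) = cvec X"
  by (simp add: vconj_def cvec_def vec_eq_iff)
lemma vconj_vconj[simp]: "vconj (vconj z) = z"
  by (simp add: vconj_def vec_eq_iff)
lemma vconj_cmat: "vconj (cmat A *v z) = cmat A *v vconj z"
  by (simp add: cmat_def vconj_def matrix_vector_mult_def vec_eq_iff)
lemma vconj_add: "vconj (x + y) = vconj x + vconj y"
  by (simp add: vconj_def vec_eq_iff)
lemma vconj_diff: "vconj (x - y) = vconj x - vconj y"
  by (simp add: vconj_def vec_eq_iff)
lemma vconj_smult: "vconj (c *s x) = cnj c *s vconj x"
  by (simp add: vconj_def vec_eq_iff)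
lemma vconj_zero[simp]: "vconj 0 = 0"
  by (simp add: vconj_def vec_eq_iff)
lemma vconj_eq_0[simp]: "vconj x = 0 \<longleftrightarrow> x = 0"
  by (metis vconj_vconj vconj_zero)
lemma mat_smult: "mat c *v z = c *s z"
  by (simp add: mat_def matrix_vector_mult_def vec_eq_iff if_distrib if_distribR sum.delta cong: if_cong)
lemma mat_mult_left: "mat a ** (M::'a::semiring_1^'n^'m) = (\<chi> i k. a * M$i$k)"
  unfolding matrix_matrix_mult_def mat_def
  by (auto simp: vec_eq_iff if_distrib if_distribR sum.delta' cong: if_cong)
lemma mat_mult_right: "(M::'a::semiring_1^'n^'m) ** mat a = (\<chi> i k. M$i$k * a)"
  unfolding matrix_matrix_mult_def mat_def
  by (auto simp: vec_eq_iff if_distrib if_distribR sum.delta cong: if_cong)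
lemma mat_mult_mat: "mat a ** mat b = mat (a*b :: 'a::comm_semiring_1)"
  unfolding mat_mult_left by (simp add: vec_eq_iff mat_def)
lemma mat_comm: "mat c ** (M::'a::comm_semiring_1^'n^'n) = M ** mat c"
  by (simp add: mat_mult_left mat_mult_right mult.commute)
lemma mat_add: "mat a + mat b = mat (a+b :: 'a::semiring_1)"
  by (simp add: mat_def vec_eq_iff)
lemma mat_diff: "mat a - mat b = mat (a-b :: 'a::ring_1)"
  by (simp add: mat_def vec_eq_iff)
lemma matrix_add_rdistrib: "(A + B) ** C = A ** C + B ** (C::'a::semiring_1^'p^'n)"
  by (simp add: matrix_matrix_mult_def vec_eq_iff sum.distrib distrib_right)
lemma matrix_diff_rdistrib: "(A - B) ** C = A ** C - B ** (C::'a::ring_1^'p^'n)"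
  by (simp add: matrix_matrix_mult_def vec_eq_iff sum_subtractf left_diff_distrib)
lemma matrix_diff_ldistrib: "C ** (A - B) = C ** A - C ** (B::'a::ring_1^'p^'n)"
  by (simp add: matrix_matrix_mult_def vec_eq_iff sum_subtractf right_diff_distrib)
lemma cj_mult: "cj (A ** B) = cj A ** cj B"
  by (simp add: cj_def matrix_matrix_mult_def vec_eq_iff)
lemma cj_add: "cj (A + B) = cj A + cj B"
  by (simp add: cj_def vec_eq_iff)
lemma cj_diff: "cj (A - B) = cj A - cj B"
  by (simp add: cj_def vec_eq_iff)
lemma cj_mat: "cj (mat c) = mat (cnj c)"
  by (simp add: cj_def mat_def vec_eq_iff)
lemma cj_cmat: "cj (cmat A) = cmat A"
  by (simp add: cj_def cmat_def vec_eq_iff)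
lemma cj_cj: "cj (cj A) = A"
  by (simp add: cj_def vec_eq_iff)
lemma cj_vec: "cj M *v vconj z = vconj (M *v z)"
  by (simp add: cj_def vconj_def matrix_vector_mult_def vec_eq_iff)
lemma det_cj: "det (cj M) = cnj (det M)"
  by (simp add: det_def cj_def)
lemma transpose_cj: "transpose (cj M) = cj (transpose M)"
  by (simp add: cj_def transpose_def vec_eq_iff)


lemma bil_expand:
  fixes b :: "real^'n \<Rightarrow> real^'n \<Rightarrow> real"
  assumes "bilinear b"
  shows "b X Y = (\<Sum>i\<in>UNIV. \<Sum>k\<in>UNIV. X$i * Y$k * b (axis i 1) (axis k 1))"
proof -
  have "b X Y = b (\<Sum>i\<in>UNIV. X$i *\<^sub>R axis i 1) (\<Sum>k\<in>UNIV. Y$k *\<^sub>R axis k 1)"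
    using basis_expansion[of X] basis_expansion[of Y] by (simp add: scalar_mult_eq_scaleR)
  also have "\<dots> = (\<Sum>(i,k)\<in>UNIV\<times>UNIV. b (X$i *\<^sub>R axis i 1) (Y$k *\<^sub>R axis k 1))"
    by (rule bilinear_sum[OF assms])
  also have "\<dots> = (\<Sum>(i,k)\<in>UNIV\<times>UNIV. X$i * Y$k * b (axis i 1) (axis k 1))"
    using assms by (simp add: bilinear_lmul bilinear_rmul mult.assoc)
  also have "\<dots> = (\<Sum>i\<in>UNIV. \<Sum>k\<in>UNIV. X$i * Y$k * b (axis i 1) (axis k 1))"
    by (simp add: sum.cartesian_product)
  finally show ?thesis .
qed

lemma omegaC_cvec:
  assumes "bilinear \<omega>"
  shows "omegaC \<omega> (cvec X) (cvec Y) = complex_of_real (\<omega> X Y)"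
  by (simp add: omegaC_def cvec_def bil_expand[OF assms, of X Y])

lemma omegaC_add1: "omegaC \<omega> (x + y) z = omegaC \<omega> x z + omegaC \<omega> y z"
  by (simp add: omegaC_def distrib_right sum.distrib)
lemma omegaC_add2: "omegaC \<omega> z (x + y) = omegaC \<omega> z x + omegaC \<omega> z y"
  by (simp add: omegaC_def distrib_left distrib_right sum.distrib)
lemma omegaC_smult1: "omegaC \<omega> (c *s x) z = c * omegaC \<omega> x z"
  by (simp add: omegaC_def sum_distrib_left mult.assoc)
lemma omegaC_smult2: "omegaC \<omega> z (c *s x) = c * omegaC \<omega> z x"
  by (simp add: omegaC_def sum_distrib_left mult_ac)

lemma vconj_cvec_comb: "vconj (a *s cvec X + b *s cvec Y) = cnj a *s cvec X + cnj b *s cvec Y"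
  by (simp add: vconj_add vconj_smult vconj_cvec)

lemma cvec_inj: "cvec X = cvec Y \<Longrightarrow> X = Y"
  by (simp add: cvec_def vec_eq_iff)
lemma cvec_0[simp]: "cvec 0 = 0"
  by (simp add: cvec_def vec_eq_iff)


locale setting =
  fixes \<omega> :: "real^'n \<Rightarrow> real^'n \<Rightarrow> real"
    and E :: "(complex^'n) set"
    and j :: "real^'n^'n"
    and h :: "complex^'n \<Rightarrow> complex^'n"
  assumes symp: "symplectic_form \<omega>"
    and pol: "positive_polarization \<omega> E"
    and acs: "associated_cx_structure E j"
    and uni: "unitary_on \<omega> E h"
    and bij1: "bij_betw (\<lambda>x. h x - x) E E"
begin

definition "J = cmat j"
definition "PE = mat (1/2) ** (mat 1 - mat \<i> ** J)"
definition "PF = mat (1/2) ** (mat 1 + mat \<i> ** J)"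
definition "F = {x. J *v x = - \<i> *s x}"

lemma bil: "bilinear \<omega>" using symp by (simp add: symplectic_form_def)
lemma skew: "\<omega> X Y = - \<omega> Y X" using symp unfolding symplectic_form_def by blast
lemma jj_mat: "j ** j = - mat 1" using acs by (simp add: associated_cx_structure_def)
lemma E_eq: "E = {x. J *v x = \<i> *s x}" using acs by (simp add: associated_cx_structure_def J_def)
lemma JJ: "J *v (J *v z) = - z"
proof -
  have "J ** J = mat (-1)" unfolding J_def cmat_mult[symmetric] jj_mat cmat_uminus cmat_mat
    by (simp add: mat_def vec_eq_iff)
  then show ?thesis by (simp add: matrix_vector_mul_assoc mat_smult)
qed
lemma cvec_neg: "cvec (- X) = - cvec X" by (simp add: cvec_def vec_eq_iff)
lemma jj: "j *v (j *v X) = - X"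
proof -
  have "cvec (j *v (j *v X)) = cvec (- X)"
    using JJ[of "cvec X"] by (simp add: J_def cmat_cvec cvec_neg)
  then show ?thesis by (rule cvec_inj)
qed

lemmas polc = conjunct1[OF pol[unfolded positive_polarization_def]]
   conjunct1[OF conjunct2[OF pol[unfolded positive_polarization_def]]]
   conjunct1[OF conjunct2[OF conjunct2[OF pol[unfolded positive_polarization_def]]]]
   conjunct2[OF conjunct2[OF conjunct2[OF pol[unfolded positive_polarization_def]]]]
lemma Esub: "subspace E" by (rule polc(1))
lemma Esmult: "x \<in> E \<Longrightarrow> c *s x \<in> E" using polc(2) by blast
lemma Eadd: "x \<in> E \<Longrightarrow> y \<in> E \<Longrightarrow> x + y \<in> E" using Esub subspace_add by blast
lemma Ediff: "x \<in> E \<Longrightarrow> y \<in> E \<Longrightarrow> x - y \<in> E" using Esub subspace_diff by blast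
lemma E0: "0 \<in> E" using Esub subspace_0 by blast
lemma Elag: assumes "x \<in> E" "y \<in> E" shows "omegaC \<omega> x y = 0"
proof -
  have "x \<in> {x. \<forall>y\<in>E. omegaC \<omega> x y = 0}" by (rule subst[OF polc(3), of "\<lambda>S. x \<in> S"]) (rule assms(1))
  then show ?thesis using assms(2) by blast
qed
lemma Epos: "x \<in> E \<Longrightarrow> x \<noteq> 0 \<Longrightarrow> herm \<omega> x x \<in> \<real> \<and> 0 < Re (herm \<omega> x x)"
  using polc(4) by blast

lemma PE_v: "PE *v z = (1/2) *s (z - \<i> *s (J *v z))"
  by (simp add: PE_def matrix_vector_mul_assoc[symmetric] matrix_vector_mult_diff_rdistrib mat_smult)
lemma PF_v: "PF *v z = (1/2) *s (z + \<i> *s (J *v z))"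
  by (simp add: PF_def matrix_vector_mul_assoc[symmetric] matrix_vector_mult_add_rdistrib mat_smult)

lemma J_smult: "J *v (c *s z) = c *s (J *v z)" by (rule vector_scalar_commute)

lemma PE_in: "PE *v z \<in> E"
  unfolding E_eq PE_v
  by (simp add: J_smult matrix_vector_mult_diff_distrib JJ vec_eq_iff algebra_simps)
lemma PF_in: "PF *v z \<in> F"
  unfolding F_def PF_v
  by (simp add: J_smult matrix_vector_right_distrib JJ vec_eq_iff algebra_simps)
lemma decomp: "PE *v z + PF *v z = z"
  unfolding PE_v PF_v by (simp add: vec_eq_iff algebra_simps)
lemma PE_E: "x \<in> E \<Longrightarrow> PE *v x = x"
  unfolding PE_v E_eq by (simp add: vec_eq_iff algebra_simps)
lemma PF_E: "x \<in> E \<Longrightarrow> PF *v x = 0"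
  unfolding PF_v E_eq by (simp add: vec_eq_iff algebra_simps)
lemma PE_F: "x \<in> F \<Longrightarrow> PE *v x = 0"
  unfolding PE_v F_def by (simp add: vec_eq_iff algebra_simps)
lemma PF_F: "x \<in> F \<Longrightarrow> PF *v x = x"
  unfolding PF_v F_def by (simp add: vec_eq_iff algebra_simps)
lemma vconj_J: "vconj (J *v z) = J *v vconj z"
  by (simp add: J_def vconj_cmat)
lemma vconj_neg: "vconj (- x) = - vconj x" by (simp add: vconj_def vec_eq_iff)
lemma vconj_E: "x \<in> E \<Longrightarrow> vconj x \<in> F"
  unfolding E_eq F_def by (simp add: vconj_J[symmetric] vconj_smult vconj_neg)
lemma vconj_F: "x \<in> F \<Longrightarrow> vconj x \<in> E"
  unfolding E_eq F_def by (simp add: vconj_J[symmetric] vconj_smult vconj_neg)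
lemma PF_vconj: "PF *v z = vconj (PE *v vconj z)"
  unfolding PE_v PF_v by (simp add: vconj_smult vconj_diff vconj_J)
lemma EF0: "x \<in> E \<Longrightarrow> x \<in> F \<Longrightarrow> x = 0"
  unfolding E_eq F_def by (auto simp: vec_eq_iff)

lemma eq_on_EF:
  assumes "\<And>x. x \<in> E \<Longrightarrow> M *v x = N *v x" "\<And>x. x \<in> E \<Longrightarrow> M *v vconj x = N *v vconj x"
  shows "M = N"
proof -
  have "M *v z = N *v z" for z
  proof -
    have "z = PE *v z + vconj (PE *v vconj z)" using decomp[of z] PF_vconj by simp
    then have "M *v z = M *v (PE *v z) + M *v vconj (PE *v vconj z)"
      "N *v z = N *v (PE *v z) + N *v vconj (PE *v vconj z)"
      by (metis matrix_vector_right_distrib)+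
    then show ?thesis using assms PE_in by simp
  qed
  then show ?thesis by (simp add: matrix_eq)
qed

lemma PE_PF: "PE + PF = mat 1"
  unfolding matrix_eq by (simp add: matrix_vector_mult_add_rdistrib decomp)
lemma cj_J: "cj J = J" by (simp add: J_def cj_cmat)
lemma mat_neg_mult: "mat (-c) ** (M::'a::ring_1^'n^'m) = - (mat c ** M)"
  by (simp add: mat_mult_left vec_eq_iff)
lemma cj_PE: "cj PE = PF"
  unfolding PE_def PF_def cj_mult cj_diff cj_mat cj_J by (simp add: mat_neg_mult)
lemma cj_PF: "cj PF = PE"
  by (metis cj_PE cj_cj)

end

context setting begin

definition gam :: "real^'n \<Rightarrow> real^'n \<Rightarrow> real" where "gam X Y = \<omega> X (j *v Y)"

lemma omegaC_comb:
  "omegaC \<omega> (a *s cvec X + b *s cvec Y) (c *s cvec Z + d *s cvec W) =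
     a*c* of_real (\<omega> X Z) + a*d* of_real (\<omega> X W) + b*c* of_real (\<omega> Y Z) + b*d* of_real (\<omega> Y W)"
  by (simp add: omegaC_add1 omegaC_add2 omegaC_smult1 omegaC_smult2 omegaC_cvec[OF bil] algebra_simps)

lemma J_cvec: "J *v cvec X = cvec (j *v X)" by (simp add: J_def cmat_cvec)

lemma PE_cvec: "PE *v cvec X = (1/2) *s cvec X + (- \<i>/2) *s cvec (j *v X)"
  unfolding PE_v J_cvec by (simp add: vec_eq_iff algebra_simps)
lemma vconj_PE_cvec: "vconj (PE *v cvec X) = (1/2) *s cvec X + (\<i>/2) *s cvec (j *v X)"
  unfolding PE_cvec by (simp add: vconj_add vconj_smult vconj_cvec vconj_diff)

lemma lag_eq: "(1/2)*(1/2)* of_real (\<omega> X Y) + (1/2)*(-\<i>/2)* of_real (\<omega> X (j *v Y))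
   + (-\<i>/2)*(1/2)* of_real (\<omega> (j *v X) Y) + (-\<i>/2)*(-\<i>/2)* of_real (\<omega> (j *v X) (j *v Y)) = 0"
  using Elag[OF PE_in[of "cvec X"] PE_in[of "cvec Y"]] unfolding PE_cvec omegaC_comb .

lemma S1: "\<omega> (j *v X) (j *v Y) = \<omega> X Y"
proof -
  have "Re ((1/2)*(1/2)* of_real (\<omega> X Y) + (1/2)*(-\<i>/2)* of_real (\<omega> X (j *v Y))
   + (-\<i>/2)*(1/2)* of_real (\<omega> (j *v X) Y) + (-\<i>/2)*(-\<i>/2)* of_real (\<omega> (j *v X) (j *v Y))) = 0"
    by (subst lag_eq) simp
  then show ?thesis by simp
qed

lemma S2: "\<omega> X (j *v Y) = - \<omega> (j *v X) Y"
proof -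
  have "Im ((1/2)*(1/2)* of_real (\<omega> X Y) + (1/2)*(-\<i>/2)* of_real (\<omega> X (j *v Y))
   + (-\<i>/2)*(1/2)* of_real (\<omega> (j *v X) Y) + (-\<i>/2)*(-\<i>/2)* of_real (\<omega> (j *v X) (j *v Y))) = 0"
    by (subst lag_eq) simp
  then show ?thesis by simp
qed

lemma herm_PE: "herm \<omega> (PE *v cvec X) (PE *v cvec Y) = of_real (gam X Y)/2 - \<i> * of_real (\<omega> X Y)/2"
proof -
  have "herm \<omega> (PE *v cvec X) (PE *v cvec Y) = ((1/2)*(1/2)* of_real (\<omega> X Y) + (1/2)*(\<i>/2)* of_real (\<omega> X (j *v Y))
   + (-\<i>/2)*(1/2)* of_real (\<omega> (j *v X) Y) + (-\<i>/2)*(\<i>/2)* of_real (\<omega> (j *v X) (j *v Y))) / \<i>"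
    unfolding herm_def vconj_PE_cvec unfolding PE_cvec omegaC_comb ..
  also have "\<dots> = of_real (gam X Y)/2 - \<i> * of_real (\<omega> X Y)/2"
    unfolding S1 gam_def S2[of X Y] by (simp add: field_simps)
  finally show ?thesis .
qed

lemma omega_self: "\<omega> X X = 0" using skew[of X X] by simp

lemma cvec_split: "cvec X = PE *v cvec X + vconj (PE *v cvec X)"
  using decomp[of "cvec X"] PF_vconj[of "cvec X"] by (simp add: vconj_cvec)

lemma PE_cvec_0: "PE *v cvec X = 0 \<Longrightarrow> X = 0"
  using cvec_split[of X] by (metis add_0 cvec_0 cvec_inj vconj_zero)

lemma gam_pos: "X \<noteq> 0 \<Longrightarrow> 0 < gam X X"
proof -
  assume "X \<noteq> 0"
  then have "PE *v cvec X \<noteq> 0" using PE_cvec_0 by blast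
  then have "0 < Re (herm \<omega> (PE *v cvec X) (PE *v cvec X))" using Epos PE_in by blast
  then show ?thesis unfolding herm_PE omega_self by simp
qed

lemma gam_sym: "gam X Y = gam Y X"
  unfolding gam_def using S2[of X Y] skew[of "j *v X" Y] by simp

lemma gam_bil: "bilinear gam"
proof -
  have lj: "linear ((*v) j)" by simp
  have "linear (\<lambda>Y. \<omega> X (j *v Y))" for X
    using linear_compose[OF lj, of "\<omega> X"] bil unfolding bilinear_def by (simp add: o_def)
  moreover have "linear (\<lambda>X. \<omega> X (j *v Y))" for Y
    using bil unfolding bilinear_def by simp
  ultimately show ?thesis unfolding bilinear_def gam_def by simp
qed

lemma mvneg: "(- A) *v x = - (A *v (x::'a::ring_1^'m))"
  by (simp add: matrix_vector_mult_def vec_eq_iff sum_negf)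
lemma mvneg2: "A *v (- x) = - (A *v (x::'a::ring_1^'m))"
  by (simp add: matrix_vector_mult_def vec_eq_iff sum_negf)
lemma gam_j: "gam (j *v X) Y = gam X ((- j) *v Y)"
  unfolding gam_def by (simp add: S1 jj mvneg mvneg2)

end


lemma mv_sum_axis: "A *v z = (\<Sum>k\<in>UNIV. z$k *s (A *v axis k (1::'a::comm_ring_1)))"
  by (simp add: vec_eq_iff matrix_vector_mult_def axis_def sum_component if_distrib if_distribR
      sum.delta mult.commute cong: if_cong)

lemma real_invertible: "(\<And>X. (A::real^'n^'n) *v X = 0 \<Longrightarrow> X = 0) \<Longrightarrow> invertible A"
  using matrix_left_invertible_ker invertible_left_inverse by blast

context setting begin

lemma h_bij: "bij_betw h E E" using uni by (simp add: unitary_on_def)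
lemma h_in: "x \<in> E \<Longrightarrow> h x \<in> E" using h_bij bij_betwE by blast
lemma h_inj: "inj_on h E" using h_bij bij_betw_def by blast
lemma h_add: "x \<in> E \<Longrightarrow> y \<in> E \<Longrightarrow> h (x + y) = h x + h y" using uni by (simp add: unitary_on_def)
lemma h_smult: "x \<in> E \<Longrightarrow> h (c *s x) = c *s h x" using uni by (simp add: unitary_on_def)
lemma h_herm: "x \<in> E \<Longrightarrow> y \<in> E \<Longrightarrow> herm \<omega> (h x) (h y) = herm \<omega> x y"
  using uni by (simp add: unitary_on_def)
lemma h0: "h 0 = 0"
  using h_smult[OF E0, of 0] by simp

lemma h_sum: "finite S \<Longrightarrow> (\<And>k. k \<in> S \<Longrightarrow> v k \<in> E) \<Longrightarrow>
   h (\<Sum>k\<in>S. c k *s v k) = (\<Sum>k\<in>S. c k *s h (v k))"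
proof (induction S rule: finite_induct)
  case empty then show ?case by (simp add: h0)
next
  case (insert a S)
  have "(\<Sum>k\<in>S. c k *s v k) \<in> E"
    using insert Esub Esmult by (intro subspace_sum) auto
  then show ?case using insert by (simp add: h_add Esmult h_smult)
qed

definition "Hm = (\<chi> i k. h (PE *v axis k 1) $ i)"

lemma Hm_v: "Hm *v z = h (PE *v z)"
proof -
  have "PE *v z = (\<Sum>k\<in>UNIV. z$k *s (PE *v axis k 1))" by (rule mv_sum_axis)
  then have "h (PE *v z) = (\<Sum>k\<in>UNIV. z$k *s h (PE *v axis k 1))"
    using h_sum[of UNIV "\<lambda>k. PE *v axis k 1" "\<lambda>k. z$k"] PE_in by simp
  then show ?thesis
    by (simp add: vec_eq_iff Hm_def matrix_vector_mult_def sum_component mult.commute)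
qed

definition "Gc = Hm ** PE + cj Hm ** PF"
definition "gg0 = (\<chi> i k. Re (Gc $ i $ k))"

lemma cj_Gc: "cj Gc = Gc"
  unfolding Gc_def cj_add cj_mult cj_cj cj_PE cj_PF by (simp add: add.commute)

lemma cmat_gg0: "cmat gg0 = Gc"
proof -
  have "Im (Gc $ i $ k) = 0" for i k
    using arg_cong[OF cj_Gc, of "\<lambda>M. M $ i $ k"] by (simp add: cj_def complex_eq_iff)
  then show ?thesis by (simp add: cmat_def gg0_def vec_eq_iff complex_eq_iff)
qed

definition "iotaP g \<longleftrightarrow> (\<forall>x\<in>E. cmat g *v x = h x) \<and> (\<forall>x\<in>E. cmat g *v vconj x = vconj (h x))"

lemma iotaP_gg0: "iotaP gg0"
  unfolding iotaP_def cmat_gg0 Gc_def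
  by (simp add: matrix_vector_mult_add_rdistrib matrix_vector_mul_assoc[symmetric] PE_E PF_E
      PE_F PF_F vconj_E Hm_v cj_vec h0)

lemma iotaP_unique: "iotaP g1 \<Longrightarrow> iotaP g2 \<Longrightarrow> g1 = g2"
  unfolding iotaP_def by (intro cmat_inj eq_on_EF) auto

definition "gg = iota E h"
definition "G = cmat gg"

lemma iotaP_gg: "iotaP gg"
proof -
  have "\<exists>!g. iotaP g" using iotaP_gg0 iotaP_unique by blast
  then have "iotaP (THE g. iotaP g)" by (rule theI')
  then show ?thesis unfolding gg_def iota_def iotaP_def[abs_def] .
qed

lemma G_E: "x \<in> E \<Longrightarrow> G *v x = h x" using iotaP_gg by (simp add: iotaP_def G_def)
lemma G_F: "x \<in> E \<Longrightarrow> G *v vconj x = vconj (h x)" using iotaP_gg by (simp add: iotaP_def G_def)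

lemma GJ: "G ** J = J ** G"
proof (rule eq_on_EF)
  fix x assume x: "x \<in> E"
  have "J *v x = \<i> *s x" using x E_eq by blast
  moreover have "J *v h x = \<i> *s h x" using h_in[OF x] E_eq by blast
  ultimately show "(G ** J) *v x = (J ** G) *v x"
    by (simp add: matrix_vector_mul_assoc[symmetric] G_E x vector_scalar_commute)
  have "J *v vconj x = - \<i> *s vconj x" using vconj_E[OF x] F_def by blast
  moreover have "J *v vconj (h x) = - \<i> *s vconj (h x)" using vconj_E[OF h_in[OF x]] F_def by blast
  ultimately show "(G ** J) *v vconj x = (J ** G) *v vconj x"
    by (simp add: matrix_vector_mul_assoc[symmetric] G_F x vector_scalar_commute mvneg2)
qed

lemma gj: "gg ** j = j ** gg"
  using GJ unfolding G_def J_def cmat_mult[symmetric] by (rule cmat_inj)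

lemma G_PE: "G *v (PE *v z) = PE *v (G *v z)"
proof -
  have "G *v (J *v z) = J *v (G *v z)" by (simp add: matrix_vector_mul_assoc GJ)
  then show ?thesis unfolding PE_v
    by (simp add: vector_scalar_commute matrix_vector_mult_diff_distrib)
qed

lemma h_PE_cvec: "h (PE *v cvec X) = PE *v cvec (gg *v X)"
  using G_E[OF PE_in] G_PE by (simp add: G_def cmat_cvec)

lemma g_preserve: "\<omega> (gg *v X) (gg *v Y) = \<omega> X Y \<and> gam (gg *v X) (gg *v Y) = gam X Y"
proof -
  have "herm \<omega> (h (PE *v cvec X)) (h (PE *v cvec Y)) = herm \<omega> (PE *v cvec X) (PE *v cvec Y)"
    by (rule h_herm[OF PE_in PE_in])
  then have e: "of_real (gam (gg *v X) (gg *v Y))/2 - \<i> * of_real (\<omega> (gg *v X) (gg *v Y))/2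
     = of_real (gam X Y)/2 - \<i> * of_real (\<omega> X Y)/2"
    unfolding h_PE_cvec herm_PE .
  have "Re (of_real (gam (gg *v X) (gg *v Y))/2 - \<i> * of_real (\<omega> (gg *v X) (gg *v Y))/2)
     = Re (of_real (gam X Y)/2 - \<i> * of_real (\<omega> X Y)/2)" using e by simp
  moreover have "Im (of_real (gam (gg *v X) (gg *v Y))/2 - \<i> * of_real (\<omega> (gg *v X) (gg *v Y))/2)
     = Im (of_real (gam X Y)/2 - \<i> * of_real (\<omega> X Y)/2)" using e by simp
  ultimately show ?thesis by simp
qed

lemma gg_inv: "invertible gg"
proof (rule real_invertible)
  fix X assume "gg *v X = 0"
  then have "h (PE *v cvec X) = h 0" using h_PE_cvec h0 by (simp add: matrix_vector_mult_0_right)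
  then have "PE *v cvec X = 0" using h_inj PE_in E0 by (simp add: inj_on_def)
  then show "X = 0" by (rule PE_cvec_0)
qed

lemma one_gg_inv: "invertible (mat 1 - gg)"
proof (rule real_invertible)
  fix X assume "(mat 1 - gg) *v X = 0"
  then have "gg *v X = X" by (simp add: matrix_vector_mult_diff_rdistrib)
  then have "h (PE *v cvec X) - PE *v cvec X = h 0 - 0" using h_PE_cvec h0 by simp
  moreover have "inj_on (\<lambda>x. h x - x) E" using bij1 bij_betw_def by blast
  ultimately have "PE *v cvec X = 0" using PE_in E0 by (simp add: inj_on_def)
  then show "X = 0" by (rule PE_cvec_0)
qed

end


lemma matrix_inv_props: "invertible (A::'a::semiring_1^'n^'n) \<Longrightarrow> A ** matrix_inv A = mat 1 \<and> matrix_inv A ** A = mat 1"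
  unfolding invertible_def matrix_inv_def by (rule someI_ex)

context setting begin

definition "K = matrix_inv (mat 1 - gg)"
definition "AA = A_of j gg"

lemma K1: "K ** (mat 1 - gg) = mat 1" and K2: "(mat 1 - gg) ** K = mat 1"
  using matrix_inv_props[OF one_gg_inv] by (simp_all add: K_def)

lemma AA_alt: "AA = (1/2) *\<^sub>R ((mat 1 + gg) ** K ** j)"
  by (simp add: AA_def A_of_def K_def)

lemma om_expand_rules:
  "\<omega> (x + y) z = \<omega> x z + \<omega> y z" "\<omega> z (x + y) = \<omega> z x + \<omega> z y"
  "\<omega> (x - y) z = \<omega> x z - \<omega> y z" "\<omega> z (x - y) = \<omega> z x - \<omega> z y"
  "\<omega> (c *\<^sub>R x) z = c * \<omega> x z" "\<omega> z (c *\<^sub>R x) = c * \<omega> z x"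
  "\<omega> (- x) z = - \<omega> x z" "\<omega> z (- x) = - \<omega> z x"
  using bil by (simp_all add: bilinear_ladd bilinear_radd bilinear_lsub bilinear_rsub
     bilinear_lmul bilinear_rmul bilinear_lneg bilinear_rneg)

lemma AA_sym: "gam (AA *v X) Y = gam X (AA *v Y)"
proof -
  define a where "a = K *v (j *v X)"
  define b where "b = K *v (j *v Y)"
  have ja: "j *v X = (mat 1 - gg) *v a" unfolding a_def by (metis matrix_vector_mul_assoc K2 matrix_vector_mul_lid)
  have jb: "j *v Y = (mat 1 - gg) *v b" unfolding b_def by (metis matrix_vector_mul_assoc K2 matrix_vector_mul_lid)
  have X: "X = - (j *v ((mat 1 - gg) *v a))" using jj[of X] ja by simp
  have AX: "AA *v X = (1/2) *\<^sub>R ((mat 1 + gg) *v a)"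
    unfolding AA_alt a_def by (simp add: scaleR_matrix_vector_assoc[symmetric] matrix_vector_mul_assoc matrix_mul_assoc)
  have AY: "AA *v Y = (1/2) *\<^sub>R ((mat 1 + gg) *v b)"
    unfolding AA_alt b_def by (simp add: scaleR_matrix_vector_assoc[symmetric] matrix_vector_mul_assoc matrix_mul_assoc)
  have l: "gam (AA *v X) Y = \<omega> ((1/2) *\<^sub>R (a + gg *v a)) (b - gg *v b)"
    unfolding gam_def AX jb by (simp add: matrix_vector_mult_add_rdistrib matrix_vector_mult_diff_rdistrib)
  have "gam X (AA *v Y) = \<omega> (- (j *v ((mat 1 - gg) *v a))) (j *v ((1/2) *\<^sub>R ((mat 1 + gg) *v b)))"
    unfolding gam_def AY using X by simp
  also have "\<dots> = - \<omega> ((mat 1 - gg) *v a) ((1/2) *\<^sub>R ((mat 1 + gg) *v b))"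
    by (simp add: om_expand_rules S1)
  also have "\<dots> = - \<omega> (a - gg *v a) ((1/2) *\<^sub>R (b + gg *v b))"
    by (simp add: matrix_vector_mult_add_rdistrib matrix_vector_mult_diff_rdistrib)
  finally have r: "gam X (AA *v Y) = - \<omega> (a - gg *v a) ((1/2) *\<^sub>R (b + gg *v b))" .
  have p: "\<omega> (gg *v a) (gg *v b) = \<omega> a b" using g_preserve by blast
  show ?thesis unfolding l r by (simp add: om_expand_rules p algebra_simps)
qed

lemma AA_in_sym: "AA \<in> sym_SJ \<omega> j"
  using AA_sym unfolding sym_SJ_def gam_def by blast

lemma Kj: "K ** j = j ** K"
proof -
  have c: "(mat 1 - gg) ** j = j ** (mat 1 - gg)"
    by (simp add: matrix_diff_rdistrib matrix_diff_ldistrib gj)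
  have "K ** j = K ** j ** ((mat 1 - gg) ** K)" by (simp add: K2)
  also have "\<dots> = K ** (j ** (mat 1 - gg)) ** K" by (simp add: matrix_mul_assoc)
  also have "\<dots> = K ** ((mat 1 - gg) ** j) ** K" by (simp add: c)
  also have "\<dots> = (K ** (mat 1 - gg)) ** j ** K" by (simp add: matrix_mul_assoc)
  also have "\<dots> = j ** K" by (simp add: K1)
  finally show ?thesis .
qed

lemma AAj: "AA ** j = j ** AA"
proof -
  have c: "(mat 1 + gg) ** j = j ** (mat 1 + gg)"
    by (simp add: matrix_add_rdistrib matrix_add_ldistrib gj)
  have "(mat 1 + gg) ** K ** j ** j = j ** ((mat 1 + gg) ** K ** j)"
  proof -
    have "j ** ((mat 1 + gg) ** K ** j) = (j ** (mat 1 + gg)) ** K ** j" by (simp add: matrix_mul_assoc)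
    also have "\<dots> = (mat 1 + gg) ** (j ** K) ** j" by (simp add: c[symmetric] matrix_mul_assoc)
    also have "\<dots> = (mat 1 + gg) ** K ** j ** j" by (simp add: Kj[symmetric] matrix_mul_assoc)
    finally show ?thesis by simp
  qed
  then show ?thesis unfolding AA_alt by (simp add: scalar_matrix_assoc[symmetric] matrix_scalar_ac)
qed

end


lemma transpose_cmat: "transpose (cmat A) = cmat (transpose A)"
  by (simp add: cmat_def transpose_def vec_eq_iff)
lemma transpose_add: "transpose (A + B) = transpose A + transpose B"
  by (simp add: transpose_def vec_eq_iff)
lemma transpose_diff: "transpose (A - B) = transpose A - transpose B"
  by (simp add: transpose_def vec_eq_iff)
lemma mm_cancel: "B ** C = mat 1 \<Longrightarrow> (A ** B) ** (C ** D) = A ** (D::'a::semiring_1^'n^'n)"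
  by (metis matrix_mul_assoc matrix_mul_lid)
lemma negmat: "(- A) ** mat (- c) = mat c ** (A::'a::comm_ring_1^'n^'n)"
  by (simp add: mat_mult_left mat_mult_right vec_eq_iff)
lemma transpose_mat': "transpose (mat c) = mat c" by simp

context setting begin

definition "Gm = (\<chi> i k. gam (axis i 1) (axis k 1))"
definition "Gi = matrix_inv Gm"

lemma gam_Gm: "gam X Y = X \<bullet> (Gm *v Y)"
  unfolding bil_expand[OF gam_bil, of X Y]
  by (simp add: inner_vec_def matrix_vector_mult_def Gm_def sum_distrib_left mult_ac)

lemma Gm_inv: "invertible Gm"
proof (rule real_invertible)
  fix X assume "Gm *v X = 0"
  then have "gam X X = 0" by (simp add: gam_Gm)
  then show "X = 0" using gam_pos by force
qed

lemma Gm1: "Gm ** Gi = mat 1" and Gm2: "Gi ** Gm = mat 1"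
  using matrix_inv_props[OF Gm_inv] by (simp_all add: Gi_def)

lemma adj_sym:
  assumes "\<And>X Y. gam (R *v X) Y = gam X (S *v Y)"
  shows "transpose R ** Gm = Gm ** S"
proof -
  have "(transpose R ** Gm) *v Y = (Gm ** S) *v Y" for Y
  proof -
    have "X \<bullet> ((transpose R ** Gm) *v Y) = X \<bullet> ((Gm ** S) *v Y)" for X
    proof -
      have "X \<bullet> ((transpose R ** Gm) *v Y) = X \<bullet> (transpose R *v (Gm *v Y))"
        by (simp only: matrix_vector_mul_assoc)
      also have "\<dots> = (X v* transpose R) \<bullet> (Gm *v Y)" by (simp only: dot_lmul_matrix)
      also have "\<dots> = (R *v X) \<bullet> (Gm *v Y)" by (simp only: vector_transpose_matrix)
      also have "\<dots> = gam X (S *v Y)" using assms by (simp add: gam_Gm)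
      also have "\<dots> = X \<bullet> ((Gm ** S) *v Y)" by (simp add: gam_Gm matrix_vector_mul_assoc)
      finally show ?thesis .
    qed
    then show ?thesis using vector_eq_ldot by blast
  qed
  then show ?thesis by (simp add: matrix_eq)
qed

definition adjm :: "complex^'n^'n \<Rightarrow> complex^'n^'n" where
  "adjm M = cmat Gi ** transpose (cj M) ** cmat Gm"

lemma cGm: "cmat Gm ** cmat Gi = mat 1" "cmat Gi ** cmat Gm = mat 1"
  using Gm1 Gm2 by (simp_all add: cmat_mult[symmetric] cmat_mat)

lemma adjm_add: "adjm (M + N) = adjm M + adjm N"
  by (simp add: adjm_def cj_add transpose_add matrix_add_ldistrib matrix_add_rdistrib)
lemma adjm_diff: "adjm (M - N) = adjm M - adjm N"
  by (simp add: adjm_def cj_diff transpose_diff matrix_diff_ldistrib matrix_diff_rdistrib)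
lemma adjm_mult: "adjm (M ** N) = adjm N ** adjm M"
proof -
  have "adjm N ** adjm M = (cmat Gi ** transpose (cj N) ** cmat Gm) ** (cmat Gi ** (transpose (cj M) ** cmat Gm))"
    by (simp add: adjm_def matrix_mul_assoc)
  also have "\<dots> = cmat Gi ** transpose (cj N) ** (transpose (cj M) ** cmat Gm)"
    by (rule mm_cancel, rule cGm(1))
  also have "\<dots> = adjm (M ** N)" by (simp add: adjm_def cj_mult matrix_transpose_mul matrix_mul_assoc)
  finally show ?thesis by simp
qed
lemma adjm_mat: "adjm (mat c) = mat (cnj c)"
proof -
  have "adjm (mat c) = (cmat Gi ** mat (cnj c)) ** cmat Gm" by (simp add: adjm_def cj_mat)
  also have "\<dots> = mat (cnj c) ** (cmat Gi ** cmat Gm)" by (simp add: mat_comm matrix_mul_assoc)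
  finally show ?thesis by (simp add: cGm)
qed
lemma det_adjm: "det (adjm M) = cnj (det M)"
proof -
  have "det (cmat Gi) * det (cmat Gm) = 1" using cGm(2) det_mul by (metis det_I)
  then show ?thesis by (simp add: adjm_def det_mul det_cj)
qed
lemma adjm_cmat: assumes "transpose R ** Gm = Gm ** S" shows "adjm (cmat R) = cmat S"
proof -
  have "Gi ** transpose R ** Gm = Gi ** (Gm ** S)" by (simp add: matrix_mul_assoc[symmetric] assms)
  also have "\<dots> = S" by (simp add: matrix_mul_assoc Gm2)
  finally show ?thesis unfolding adjm_def cj_cmat transpose_cmat cmat_mult[symmetric] by simp
qed

lemma adjm_J: "adjm J = - J"
proof -
  have "adjm (cmat j) = cmat (- j)" by (rule adjm_cmat, rule adj_sym, rule gam_j)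
  then show ?thesis by (simp add: J_def cmat_uminus)
qed

lemma adjm_PE: "adjm PE = PE"
proof -
  have "adjm PE = (mat 1 - (- J) ** mat (- \<i>)) ** mat (1/2)"
    by (simp only: PE_def adjm_mult adjm_diff adjm_mat adjm_J complex_cnj_one complex_cnj_i
        complex_cnj_divide complex_cnj_numeral)
  also have "\<dots> = mat (1/2) ** (mat 1 - mat \<i> ** J)" by (simp only: negmat mat_comm)
  finally show ?thesis by (simp add: PE_def)
qed

lemma adjm_PF: "adjm PF = PF"
proof -
  have "PF = mat 1 - PE" using PE_PF by (simp add: algebra_simps)
  then show ?thesis using adjm_diff[of "mat 1" PE] by (simp add: adjm_PE adjm_mat)
qed

end

context setting begin

definition "extE P = P ** PE + PF"
definition "extF P = P ** PF + PE"

lemma comm_PE: assumes "P ** J = J ** P" shows "P ** PE = PE ** P"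
proof -
  have "P *v (PE *v z) = PE *v (P *v z)" for z
  proof -
    have "P *v (J *v z) = J *v (P *v z)" by (simp add: matrix_vector_mul_assoc assms)
    then show ?thesis unfolding PE_v by (simp add: vector_scalar_commute matrix_vector_mult_diff_distrib)
  qed
  then show ?thesis by (simp add: matrix_eq matrix_vector_mul_assoc[symmetric])
qed

lemma P_F: assumes "P ** J = J ** P" "y \<in> F" shows "P *v y \<in> F"
proof -
  have "J *v (P *v y) = P *v (J *v y)" by (simp add: matrix_vector_mul_assoc assms)
  then show ?thesis using assms(2) unfolding F_def by (simp add: vector_scalar_commute mvneg2)
qed

lemma ext_prod: assumes "P ** J = J ** P" shows "extE P ** extF P = P"
proof (rule eq_on_EF)
  fix x assume x: "x \<in> E"
  show "(extE P ** extF P) *v x = P *v x"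
    by (simp add: extE_def extF_def matrix_vector_mul_assoc[symmetric] matrix_vector_mult_add_rdistrib
        PE_E PF_E x)
  have y: "vconj x \<in> F" by (rule vconj_E[OF x])
  have Py: "P *v vconj x \<in> F" by (rule P_F[OF assms y])
  show "(extE P ** extF P) *v vconj x = P *v vconj x"
    by (simp add: extE_def extF_def matrix_vector_mul_assoc[symmetric] matrix_vector_mult_add_rdistrib
        PE_F PF_F y Py)
qed

lemma cj_extE: "cj (extE Q) = extF (cj Q)"
  by (simp add: extE_def extF_def cj_add cj_mult cj_PE cj_PF)

lemma cj_comm: "P ** J = J ** P \<Longrightarrow> cj P ** J = J ** cj P"
  by (metis cj_J cj_mult)

lemma adjm_extE: assumes "adjm P = cj P" "P ** J = J ** P" shows "adjm (extE P) = extE (cj P)"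
proof -
  have "adjm (extE P) = PE ** cj P + PF"
    by (simp add: extE_def adjm_add adjm_mult adjm_PE adjm_PF assms(1))
  also have "\<dots> = extE (cj P)" using comm_PE[OF cj_comm[OF assms(2)]] by (simp add: extE_def)
  finally show ?thesis .
qed

lemma detE_props: assumes "adjm P = cj P" "P ** J = J ** P"
  shows "det (extE (cj P)) = cnj (det (extE P))" and "det P = det (extE P) ^ 2"
proof -
  show c: "det (extE (cj P)) = cnj (det (extE P))"
    using det_adjm[of "extE P"] adjm_extE[OF assms] by simp
  have "extF P = cj (extE (cj P))" by (simp add: cj_extE cj_cj)
  then have "det (extF P) = det (extE P)" using c by (simp add: det_cj)
  then show "det P = det (extE P) ^ 2"
    using ext_prod[OF assms(2)] det_mul[of "extE P" "extF P"] by (simp add: power2_eq_square)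
qed

lemma hpi: "half_plus_iA B = mat (1/2) + mat \<i> ** cmat B"
  unfolding mat_mult_left by (simp add: half_plus_iA_def vec_eq_iff mat_def cmat_def)

lemma sym_gam: "B \<in> sym_SJ \<omega> j \<Longrightarrow> gam (B *v X) Y = gam X (B *v Y)"
  unfolding sym_SJ_def gam_def by blast

lemma adjm_hpi: assumes "B \<in> sym_SJ \<omega> j" shows "adjm (half_plus_iA B) = cj (half_plus_iA B)"
proof -
  have "adjm (cmat B) = cmat B" by (rule adjm_cmat, rule adj_sym, rule sym_gam[OF assms])
  then show ?thesis unfolding hpi
    by (simp add: adjm_add adjm_mult adjm_mat cj_add cj_mult cj_mat cj_cmat mat_comm)
qed

lemma J_hpi: assumes "B ** j = j ** B" shows "half_plus_iA B ** J = J ** half_plus_iA B"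
proof -
  have c: "cmat B ** J = J ** cmat B" using assms by (simp add: J_def cmat_mult[symmetric])
  have "half_plus_iA B ** J = mat (1/2) ** J + mat \<i> ** (cmat B ** J)"
    by (simp add: hpi matrix_add_rdistrib matrix_mul_assoc)
  also have "\<dots> = J ** mat (1/2) + (mat \<i> ** J) ** cmat B"
    by (simp only: c mat_comm[of "1/2" J] matrix_mul_assoc)
  also have "\<dots> = J ** half_plus_iA B"
    by (simp only: hpi matrix_add_ldistrib matrix_mul_assoc mat_comm[of \<i> J])
  finally show ?thesis .
qed

lemma sym_sub: "subspace (sym_SJ \<omega> j)"
  unfolding subspace_def sym_SJ_def
  by (simp add: matrix_vector_mult_add_rdistrib scaleR_matrix_vector_assoc[symmetric] om_expand_rules
       matrix_vector_right_distrib matrix_vector_mult_scaleR bilinear_lzero[OF bil] bilinear_rzero[OF bil])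

lemma sAA_sym: "t *\<^sub>R AA \<in> sym_SJ \<omega> j"
  using sym_sub AA_in_sym by (simp add: subspace_scale)

lemma sAA_j: "(t *\<^sub>R AA) ** j = j ** (t *\<^sub>R AA)"
  by (simp add: scalar_matrix_assoc[symmetric] matrix_scalar_ac AAj)

end

context setting begin

definition "gi = matrix_inv gg"
definition "Nm = mat 1 - cmat gi"

lemma gi1: "gg ** gi = mat 1" and gi2: "gi ** gg = mat 1"
  using matrix_inv_props[OF gg_inv] by (simp_all add: gi_def)

lemma inv_E: assumes x: "x \<in> E" shows "inv_into E h x \<in> E" "h (inv_into E h x) = x"
proof -
  show "inv_into E h x \<in> E" using bij_betw_inv_into[OF h_bij] x bij_betwE by blast
  have "x \<in> h ` E" using h_bij x by (simp add: bij_betw_def)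
  then show "h (inv_into E h x) = x" by (rule f_inv_into_f)
qed

lemma cgi_E: assumes x: "x \<in> E" shows "cmat gi *v x = inv_into E h x"
proof -
  have e: "G *v inv_into E h x = x" using G_E inv_E[OF x] by simp
  have "cmat gi *v x = cmat gi *v (G *v inv_into E h x)" by (simp only: e)
  also have "\<dots> = (cmat gi ** G) *v inv_into E h x" by (rule matrix_vector_mul_assoc)
  also have "\<dots> = inv_into E h x" by (simp add: G_def cmat_mult[symmetric] gi2 cmat_mat)
  finally show ?thesis .
qed

lemma Nm_E: "x \<in> E \<Longrightarrow> Nm *v x = x - inv_into E h x"
  by (simp add: Nm_def matrix_vector_mult_diff_rdistrib cgi_E)

lemma det_on_eq: "det_on E (\<lambda>x. x - inv_into E h x) = det (extE Nm)"
proof -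
  let ?P = "\<lambda>M. (\<forall>x\<in>E. M *v x = x - inv_into E h x) \<and> (\<forall>x\<in>E. M *v vconj x = vconj x)"
  have p: "?P (extE Nm)"
    by (simp add: extE_def matrix_vector_mult_add_rdistrib matrix_vector_mul_assoc[symmetric]
        PE_E PF_E PE_F PF_F vconj_E Nm_E)
  have "\<exists>!M. ?P M"
  proof (rule ex1I[of ?P "extE Nm"])
    show "?P (extE Nm)" by (rule p)
    fix M assume "?P M" then show "M = extE Nm" using p by (intro eq_on_EF) auto
  qed
  then have "(THE M. ?P M) = extE Nm" using p by (rule the1_equality)
  then show ?thesis by (simp add: det_on_def)
qed

lemma cK1: "cmat K ** (mat 1 - G) = mat 1"
proof -
  have "cmat (K ** (mat 1 - gg)) = cmat (mat 1)" using K1 by simp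
  then show ?thesis by (simp add: cmat_mult cmat_diff cmat_mat G_def)
qed
lemma cK2: "(mat 1 - G) ** cmat K = mat 1"
proof -
  have "cmat ((mat 1 - gg) ** K) = cmat (mat 1)" using K2 by simp
  then show ?thesis by (simp add: cmat_mult cmat_diff cmat_mat G_def)
qed

lemma cAA: "cmat AA = mat (1/2) ** ((mat 1 + G) ** cmat K ** J)"
  by (simp add: AA_alt cmat_scaleR cmat_mult cmat_add cmat_mat G_def J_def)

lemma P1_key: assumes y: "y \<in> E" shows "half_plus_iA AA *v y = - (G *v (cmat K *v y))"
proof -
  define w where "w = cmat K *v y"
  have yw: "y = w - G *v w"
  proof -
    have "y = ((mat 1 - G) ** cmat K) *v y" by (simp add: cK2)
    then show ?thesis by (simp add: w_def matrix_vector_mul_assoc[symmetric] matrix_vector_mult_diff_rdistrib)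
  qed
  have Jy: "J *v y = \<i> *s y" using y E_eq by blast
  have "cmat AA *v y = (1/2) *s ((mat 1 + G) *v (cmat K *v (J *v y)))"
    by (simp add: cAA matrix_vector_mul_assoc[symmetric] mat_smult)
  also have "\<dots> = (\<i>/2) *s (w + G *v w)"
    by (simp add: Jy vector_scalar_commute w_def matrix_vector_mult_add_rdistrib vec_eq_iff algebra_simps)
  finally have A: "cmat AA *v y = (\<i>/2) *s (w + G *v w)" .
  have "half_plus_iA AA *v y = (1/2) *s y + \<i> *s (cmat AA *v y)"
    by (simp add: hpi matrix_vector_mult_add_rdistrib matrix_vector_mul_assoc[symmetric] mat_smult)
  also have "\<dots> = - (G *v w)"
    unfolding A by (subst yw) (simp add: vec_eq_iff algebra_simps)
  finally show ?thesis by (simp add: w_def)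
qed

lemma final_prod: "extE (half_plus_iA AA) ** extE Nm = mat 1"
proof (rule eq_on_EF)
  fix x assume x: "x \<in> E"
  define y where "y = x - inv_into E h x"
  have y: "y \<in> E" unfolding y_def using x inv_E(1)[OF x] by (rule Ediff)
  have eN: "extE Nm *v x = y"
    by (simp add: extE_def matrix_vector_mult_add_rdistrib matrix_vector_mul_assoc[symmetric]
        PE_E PF_E x Nm_E y_def)
  define w where "w = cmat K *v y"
  have "half_plus_iA AA *v y = - (G *v w)" using P1_key[OF y] by (simp add: w_def)
  moreover have "G *v w + x = 0"
  proof -
    have yw: "y = w - G *v w"
    proof -
      have "y = ((mat 1 - G) ** cmat K) *v y" by (simp add: cK2)
      then show ?thesis by (simp add: w_def matrix_vector_mul_assoc[symmetric] matrix_vector_mult_diff_rdistrib)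
    qed
    have Gi_x: "G *v inv_into E h x = x" using G_E inv_E[OF x] by simp
    have "(mat 1 - G) *v (G *v w + x) = G *v (w - G *v w) + x - G *v x"
      by (simp add: matrix_vector_mult_diff_rdistrib matrix_vector_right_distrib
          matrix_vector_mult_diff_distrib algebra_simps)
    also have "\<dots> = 0" unfolding yw[symmetric] y_def
      by (simp add: matrix_vector_mult_diff_distrib Gi_x)
    finally have "(mat 1 - G) *v (G *v w + x) = 0" .
    then have "(cmat K ** (mat 1 - G)) *v (G *v w + x) = 0"
      by (simp add: matrix_vector_mul_assoc[symmetric])
    then show ?thesis by (simp add: cK1)
  qed
  ultimately have P: "half_plus_iA AA *v y = x" using neg_eq_iff_add_eq_0 by metis
  show "(extE (half_plus_iA AA) ** extE Nm) *v x = mat 1 *v x"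
    by (simp add: matrix_vector_mul_assoc[symmetric] eN)
      (simp add: extE_def matrix_vector_mult_add_rdistrib matrix_vector_mul_assoc[symmetric] PE_E PF_E y P)
next
  fix x assume x: "x \<in> E"
  have y: "vconj x \<in> F" by (rule vconj_E[OF x])
  show "(extE (half_plus_iA AA) ** extE Nm) *v vconj x = mat 1 *v vconj x"
    by (simp add: extE_def matrix_vector_mul_assoc[symmetric] matrix_vector_mult_add_rdistrib
        PE_F PF_F y)
qed

lemma q1: "det (extE (half_plus_iA AA)) = 1 / det_on E (\<lambda>x. x - inv_into E h x)"
proof -
  have "det (extE (half_plus_iA AA)) * det (extE Nm) = 1"
    using final_prod det_mul by (metis det_I)
  moreover then have "det (extE Nm) \<noteq> 0" by auto
  ultimately show ?thesis unfolding det_on_eq by (simp add: eq_divide_eq)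
qed

end


lemma cont_det:
  assumes "\<And>i k. continuous_on S (\<lambda>x. F x $ i $ k)"
  shows "continuous_on S (\<lambda>x. det (F x :: complex^'n^'n))"
  unfolding det_def by (intro continuous_intros assms)

lemma sign_path:
  fixes \<phi> \<psi> :: "real \<Rightarrow> complex"
  assumes c1: "continuous_on {0..1} \<phi>" and c2: "continuous_on {0..1} \<psi>"
    and sq: "\<And>t. t \<in> {0..1} \<Longrightarrow> \<phi> t ^ 2 = \<psi> t ^ 2"
    and nz: "\<And>t. t \<in> {0..1} \<Longrightarrow> \<psi> t \<noteq> 0"
    and e0: "\<phi> 0 = \<psi> 0"
  shows "\<phi> 1 = \<psi> 1"
proof (rule ccontr)
  assume ne: "\<phi> 1 \<noteq> \<psi> 1"
  define r where "r t = Re (\<phi> t / \<psi> t)" for t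
  have pm: "\<phi> t / \<psi> t = 1 \<or> \<phi> t / \<psi> t = -1" if "t \<in> {0..1}" for t
  proof -
    have "(\<phi> t / \<psi> t) ^ 2 = 1" using sq[OF that] nz[OF that] by (simp add: power_divide)
    then show ?thesis by (simp add: power2_eq_1_iff)
  qed
  have cr: "continuous_on {0..1} r"
    unfolding r_def by (intro continuous_intros c1 c2) (use nz in auto)
  have r0: "r 0 = 1" unfolding r_def using e0 nz[of 0] by simp
  have "\<phi> 1 / \<psi> 1 \<noteq> 1" using ne nz[of 1] by auto
  then have r1: "r 1 = -1" using pm[of 1] unfolding r_def by auto
  obtain t where t: "0 \<le> t" "t \<le> 1" "r t = 0"
    using IVT2'[of r 1 0 0, OF _ _ _ cr] r0 r1 by auto
  then show False using pm[of t] unfolding r_def by auto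
qed

lemma sq_pos_eq: fixes z w :: complex
  assumes "z ^ 2 = w ^ 2" "0 < Re z" "0 < Re w" shows "z = w"
  using assms by (auto simp: power2_eq_iff)

lemma sq_real: fixes z :: complex
  assumes "z ^ 2 = complex_of_real r" "0 < r" shows "z \<in> \<real>" "z \<noteq> 0"
proof -
  have "Re (z^2) = r" "Im (z^2) = 0" using assms by simp_all
  then have a: "Re z * Re z - Im z * Im z = r" and b: "Re z * Im z = 0"
    by (auto simp: power2_eq_square)
  have "Im z = 0"
  proof (rule ccontr)
    assume "Im z \<noteq> 0"
    then have "Re z = 0" using b by simp
    then have "- (Im z * Im z) = r" using a by simp
    moreover have "0 \<le> Im z * Im z" by simp
    ultimately show False using assms(2) by linarith
  qed
  then show "z \<in> \<real>" by (simp add: complex_is_Real_iff)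
  show "z \<noteq> 0" using assms by auto
qed

context setting begin

definition "Dt (B::real^'n^'n) = det (half_plus_iA B)"

lemma gam_rules: "gam (c *\<^sub>R x) y = c * gam x y" "gam x (c *\<^sub>R y) = c * gam x y"
  "gam (- x) y = - gam x y" "gam x (- y) = - gam x y"
  using gam_bil by (simp_all add: bilinear_lmul bilinear_rmul bilinear_lneg bilinear_rneg)

lemma D_nz: assumes B: "B \<in> sym_SJ \<omega> j" shows "Dt B \<noteq> 0"
proof -
  have inj: "z = 0" if z: "half_plus_iA B *v z = 0" for z
  proof -
    define X where "X = (\<chi> i. Re (z $ i))"
    define Y where "Y = (\<chi> i. Im (z $ i))"
    have comp: "(half_plus_iA B *v z) $ i = z $ i / 2 + \<i> * (\<Sum>k\<in>UNIV. complex_of_real (B$i$k) * z$k)" for i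
      by (simp add: hpi matrix_vector_mult_add_rdistrib matrix_vector_mul_assoc[symmetric] mat_smult)
        (simp add: matrix_vector_mult_def cmat_def)
    have "Re ((half_plus_iA B *v z) $ i) = 0" "Im ((half_plus_iA B *v z) $ i) = 0" for i
      using z by simp_all
    then have e1: "X $ i / 2 - (B *v Y) $ i = 0" and e2: "Y $ i / 2 + (B *v X) $ i = 0" for i
      unfolding comp by (simp_all add: X_def Y_def matrix_vector_mult_def Re_sum Im_sum)
    have "X $ i = 2 * (B *v Y) $ i" for i using e1[of i] by linarith
    then have X: "X = 2 *\<^sub>R (B *v Y)" by (simp add: vec_eq_iff)
    have "(B *v X) $ i = - (Y $ i / 2)" for i using e2[of i] by linarith
    then have Y: "B *v X = - ((1/2) *\<^sub>R Y)" by (simp add: vec_eq_iff)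
    have "gam X X = 2 * gam (B *v Y) X" by (subst (1) X) (simp add: gam_rules)
    also have "\<dots> = 2 * gam Y (B *v X)" using sym_gam[OF B] by simp
    also have "\<dots> = - gam Y Y" unfolding Y by (simp add: gam_rules)
    finally have s: "gam X X + gam Y Y = 0" by simp
    have ge: "0 \<le> gam V V" for V using gam_pos[of V] by (cases "V = 0") (auto simp: gam_Gm)
    have "gam X X = 0" "gam Y Y = 0" using s ge[of X] ge[of Y] by linarith+
    then have "X = 0" "Y = 0" using gam_pos[of X] gam_pos[of Y] by auto
    then show "z = 0" by (simp add: X_def Y_def vec_eq_iff complex_eq_iff)
  qed
  then have "\<exists>C. C ** half_plus_iA B = mat 1" using matrix_left_invertible_ker by blast
  then have "invertible (half_plus_iA B)" using invertible_left_inverse by blast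
  then show ?thesis unfolding Dt_def by (simp add: invertible_det_nz)
qed

lemma Dt_cont: "continuous_on UNIV Dt"
  unfolding Dt_def by (rule cont_det) (simp add: half_plus_iA_def continuous_intros)

end

context setting begin

lemma hpi0: "half_plus_iA 0 = mat (1/2)"
  by (simp add: half_plus_iA_def mat_def vec_eq_iff)

lemma Dt0: "Dt 0 = complex_of_real ((1/2) ^ CARD('n))"
  by (simp add: Dt_def hpi0 det_diagonal mat_def)

definition "Pdef f \<longleftrightarrow> continuous_on (sym_SJ \<omega> j) f
      \<and> (\<forall>B\<in>sym_SJ \<omega> j. (f B)^2 = det (half_plus_iA B))
      \<and> f 0 \<in> \<real> \<and> 0 < Re (f 0)
      \<and> (\<forall>B. B \<notin> sym_SJ \<omega> j \<longrightarrow> f B = 0)"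

lemma sym0: "0 \<in> sym_SJ \<omega> j" using sym_sub subspace_0 by blast

lemma Pdef_exists: "\<exists>f. Pdef f"
proof -
  have cvx: "convex (sym_SJ \<omega> j)" by (rule subspace_imp_convex[OF sym_sub])
  obtain g where g: "continuous_on (sym_SJ \<omega> j) g" "\<And>B. B \<in> sym_SJ \<omega> j \<Longrightarrow> Dt B = (g B) ^ 2"
    using continuous_sqrt_on_contractible[OF continuous_on_subset[OF Dt_cont] convex_imp_contractible[OF cvx]]
      D_nz by blast
  have g0: "g 0 ^ 2 = complex_of_real ((1/2) ^ CARD('n))" using g(2)[OF sym0] Dt0 by simp
  have gr: "g 0 \<in> \<real>" "g 0 \<noteq> 0" using sq_real[OF g0] by simp_all
  then have "Re (g 0) \<noteq> 0" by (metis complex_eq_iff complex_is_Real_iff zero_complex.simps)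
  define s :: real where "s = (if Re (g 0) > 0 then 1 else -1)"
  define f where "f B = (if B \<in> sym_SJ \<omega> j then complex_of_real s * g B else 0)" for B
  have s2: "(complex_of_real s)^2 = 1" by (simp add: s_def)
  have "continuous_on (sym_SJ \<omega> j) f"
    using continuous_on_cong[of "sym_SJ \<omega> j" "sym_SJ \<omega> j" f "\<lambda>B. complex_of_real s * g B"]
      continuous_on_mult[OF continuous_on_const g(1)] f_def by simp
  moreover have "\<forall>B\<in>sym_SJ \<omega> j. (f B)^2 = det (half_plus_iA B)"
    using g(2) s2 by (simp add: f_def power_mult_distrib Dt_def)
  moreover have "f 0 \<in> \<real>" using gr sym0 by (simp add: f_def s_def)
  moreover have "0 < Re (f 0)" using \<open>Re (g 0) \<noteq> 0\<close> sym0 by (simp add: f_def s_def)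
  moreover have "\<forall>B. B \<notin> sym_SJ \<omega> j \<longrightarrow> f B = 0" by (simp add: f_def)
  ultimately show ?thesis unfolding Pdef_def by blast
qed

lemma sym_scale: "B \<in> sym_SJ \<omega> j \<Longrightarrow> t *\<^sub>R B \<in> sym_SJ \<omega> j"
  using sym_sub by (simp add: subspace_scale)

lemma cont_scale: "B \<in> sym_SJ \<omega> j \<Longrightarrow> continuous_on (sym_SJ \<omega> j) f \<Longrightarrow>
   continuous_on {0..1} (\<lambda>t::real. f (t *\<^sub>R B))"
proof -
  assume B: "B \<in> sym_SJ \<omega> j" and c: "continuous_on (sym_SJ \<omega> j) f"
  have "continuous_on {0..1} (\<lambda>t::real. t *\<^sub>R B)"
    by (intro continuous_on_scaleR continuous_on_id continuous_on_const)
  moreover have "(\<lambda>t::real. t *\<^sub>R B) ` {0..1} \<subseteq> sym_SJ \<omega> j" using sym_scale[OF B] by blast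
  ultimately show ?thesis by (rule continuous_on_compose2[OF c])
qed

lemma Pdef_D: assumes "Pdef f"
  shows "continuous_on (sym_SJ \<omega> j) f" "\<And>B. B \<in> sym_SJ \<omega> j \<Longrightarrow> (f B)^2 = Dt B"
    "f 0 \<in> \<real>" "0 < Re (f 0)" "\<And>B. B \<notin> sym_SJ \<omega> j \<Longrightarrow> f B = 0"
  using assms unfolding Pdef_def Dt_def by blast+

lemma Pdef_unique: assumes P1: "Pdef f1" and P2: "Pdef f2" shows "f1 = f2"
proof
  fix B
  show "f1 B = f2 B"
  proof (cases "B \<in> sym_SJ \<omega> j")
    case False then show ?thesis using Pdef_D(5)[OF P1] Pdef_D(5)[OF P2] by simp
  next
    case True
    have e0: "f1 0 = f2 0"
    proof (rule sq_pos_eq)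
      show "f1 0 ^ 2 = f2 0 ^ 2" using Pdef_D(2)[OF P1 sym0] Pdef_D(2)[OF P2 sym0] by simp
      show "0 < Re (f1 0)" by (rule Pdef_D(4)[OF P1])
      show "0 < Re (f2 0)" by (rule Pdef_D(4)[OF P2])
    qed
    have "f1 (1 *\<^sub>R B) = f2 (1 *\<^sub>R B)"
    proof (rule sign_path[where \<phi>="\<lambda>t. f1 (t *\<^sub>R B)" and \<psi>="\<lambda>t. f2 (t *\<^sub>R B)"])
      show "continuous_on {0..1} (\<lambda>t. f1 (t *\<^sub>R B))" by (rule cont_scale[OF True Pdef_D(1)[OF P1]])
      show "continuous_on {0..1} (\<lambda>t. f2 (t *\<^sub>R B))" by (rule cont_scale[OF True Pdef_D(1)[OF P2]])
      fix t :: real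
      show "f1 (t *\<^sub>R B) ^ 2 = f2 (t *\<^sub>R B) ^ 2"
        using Pdef_D(2)[OF P1 sym_scale[OF True]] Pdef_D(2)[OF P2 sym_scale[OF True]] by simp
      have "f2 (t *\<^sub>R B) ^ 2 \<noteq> 0"
        using Pdef_D(2)[OF P2 sym_scale[OF True]] D_nz[OF sym_scale[OF True, of t]] by simp
      then show "f2 (t *\<^sub>R B) \<noteq> 0" by simp
    next
      show "f1 (0 *\<^sub>R B) = f2 (0 *\<^sub>R B)" using e0 by simp
    qed
    then show ?thesis by simp
  qed
qed

lemma Pdef_sqrt_det: "Pdef (sqrt_det \<omega> j)"
proof -
  have "\<exists>!f. Pdef f" using Pdef_exists Pdef_unique by blast
  then have "Pdef (THE f. Pdef f)" by (rule theI')
  then show ?thesis unfolding sqrt_det_def Pdef_def[abs_def] .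
qed

end

context setting begin

definition "qq t = det (extE (half_plus_iA (t *\<^sub>R AA)))"
definition "rr (s::real) = det (extE (mat (complex_of_real s)))"

lemma qq_sq: "qq t ^ 2 = Dt (t *\<^sub>R AA)"
  using detE_props(2)[OF adjm_hpi[OF sAA_sym] J_hpi[OF sAA_j]] by (simp add: qq_def Dt_def)

lemma qq_nz: "qq t \<noteq> 0"
  using qq_sq[of t] D_nz[OF sAA_sym] by auto

lemma qq_cont: "continuous_on {0..1} qq"
  unfolding qq_def[abs_def] by (rule cont_det)
    (simp add: extE_def half_plus_iA_def matrix_matrix_mult_def continuous_intros)

lemma rr_props: "Im (rr s) = 0" "s \<noteq> 0 \<Longrightarrow> rr s \<noteq> 0"
proof -
  have a: "adjm (mat (complex_of_real s)) = cj (mat (complex_of_real s))" by (simp add: adjm_mat cj_mat)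
  have c: "mat (complex_of_real s) ** J = J ** mat (complex_of_real s)" by (rule mat_comm)
  have e: "cj (mat (complex_of_real s)) = mat (complex_of_real s)" by (simp add: cj_mat)
  have "det (extE (mat (complex_of_real s))) = cnj (det (extE (mat (complex_of_real s))))"
    using detE_props(1)[OF a c] by (simp only: e)
  then have "rr s = cnj (rr s)" by (simp add: rr_def)
  then show "Im (rr s) = 0" by (metis Im_complex_of_real Reals_cnj_iff complex_is_Real_iff)
  assume "s \<noteq> 0"
  have "det (mat (complex_of_real s) :: complex^'n^'n) \<noteq> 0" using \<open>s \<noteq> 0\<close>
    by (simp add: det_diagonal mat_def)
  then show "rr s \<noteq> 0" using detE_props(2)[OF a c] by (auto simp: rr_def)
qed

lemma rr1: "rr 1 = 1"
  by (simp add: rr_def extE_def PE_PF)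

lemma rr_cont: "continuous_on {1/2..1} rr"
  unfolding rr_def[abs_def] by (rule cont_det)
    (simp add: extE_def mat_mult_left continuous_intros)

lemma rr_half: "0 < Re (rr (1/2))"
proof (rule ccontr)
  assume "\<not> 0 < Re (rr (1/2))"
  then have "Re (rr (1/2)) \<le> 0" by simp
  moreover have "0 \<le> Re (rr 1)" by (simp add: rr1)
  moreover have "continuous_on {1/2..1} (\<lambda>s. Re (rr s))" by (intro continuous_intros rr_cont)
  ultimately obtain s where s: "1/2 \<le> s" "s \<le> 1" "Re (rr s) = 0"
    using IVT'[of "\<lambda>s. Re (rr s)" "1/2" 0 1] by auto
  then have "rr s = 0" using rr_props(1)[of s] by (simp add: complex_eq_iff)
  then show False using rr_props(2)[of s] s by simp
qed

lemma qq0: "qq 0 = sqrt_det \<omega> j 0"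
proof (rule sq_pos_eq)
  have "qq 0 = rr (1/2)" by (simp add: qq_def rr_def hpi0)
  then show "0 < Re (qq 0)" using rr_half by simp
  show "0 < Re (sqrt_det \<omega> j 0)" by (rule Pdef_D(4)[OF Pdef_sqrt_det])
  show "qq 0 ^ 2 = sqrt_det \<omega> j 0 ^ 2" using qq_sq[of 0] Pdef_D(2)[OF Pdef_sqrt_det sym0] by simp
qed

lemma main_result: "sqrt_det \<omega> j (A_of j (iota E h)) = 1 / det_on E (\<lambda>x. x - inv_into E h x)"
proof -
  have "sqrt_det \<omega> j (1 *\<^sub>R AA) = qq 1"
  proof (rule sign_path[where \<phi>="\<lambda>t. sqrt_det \<omega> j (t *\<^sub>R AA)" and \<psi>=qq])
    show "continuous_on {0..1} (\<lambda>t. sqrt_det \<omega> j (t *\<^sub>R AA))"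
      by (rule cont_scale[OF AA_in_sym Pdef_D(1)[OF Pdef_sqrt_det]])
    show "continuous_on {0..1} qq" by (rule qq_cont)
    show "sqrt_det \<omega> j (t *\<^sub>R AA) ^ 2 = qq t ^ 2" for t
      using Pdef_D(2)[OF Pdef_sqrt_det sAA_sym] qq_sq by simp
    show "qq t \<noteq> 0" for t by (rule qq_nz)
    show "sqrt_det \<omega> j (0 *\<^sub>R AA) = qq 0" using qq0 by simp
  qed
  then have "sqrt_det \<omega> j AA = det (extE (half_plus_iA AA))" by (simp add: qq_def)
  then show ?thesis using q1 by (simp add: AA_def gg_def)
qed

end

theorem mainTheorem8:
  fixes \<omega> :: "real^'n \<Rightarrow> real^'n \<Rightarrow> real"
    and E :: "(complex^'n) set"
    and j :: "real^'n^'n"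
    and h :: "complex^'n \<Rightarrow> complex^'n"
  assumes "symplectic_form \<omega>"
    and "positive_polarization \<omega> E"
    and "associated_cx_structure E j"
    and "unitary_on \<omega> E h"
    and "bij_betw (\<lambda>x. h x - x) E E"
  shows "sqrt_det \<omega> j (A_of j (iota E h)) = 1 / det_on E (\<lambda>x. x - inv_into E h x)"
  by (rule setting.main_result[OF setting.intro[OF assms]])


end
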